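(* Let $0<t_0\le1/2$. For every integer $k\ge0$, every $t\in[t_0,1]$, every integer $0\le j\le 2k$ and all $(m_1,\eta_1)\in\mathbb Z\times\mathbb R$, $$|\partial_{\eta_1}^j\rho_k|\le 8^j\frac{(2k)!}{(2k-j)!}\rho_{k-\frac j2}.$$
   Context: For $\sigma\ge0$ and $t\in[t_0,1]$, $\rho_\sigma(m_1,\eta_1)=\big((t-t_0)\eta_1^2+(t-t_0)^2m_1\eta_1+\frac{(t-t_0)^3}{3}m_1^2\big)^\sigma$ (the base is nonnegative), with the convention $\rho_0=1$. *)

theory Defs
  imports "HOL-Analysis.Analysis"
begin

definition rho_base :: "real \<Rightarrow> real \<Rightarrow> real \<Rightarrow> real \<Rightarrow> real" where
  "rho_base t0 t m eta = (t - t0) * eta^2 + (t - t0)^2 * m * eta + (t - t0)^3 / 3 * m^2"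

definition rho :: "real \<Rightarrow> real \<Rightarrow> real \<Rightarrow> real \<Rightarrow> real \<Rightarrow> real" where
  "rho t0 t \<sigma> m eta = (if \<sigma> = 0 then 1 else (rho_base t0 t m eta) powr \<sigma>)"

end

theory Submission
  imports Defs "HOL-Computational_Algebra.Polynomial"
begin

fun ff :: "nat \<Rightarrow> nat \<Rightarrow> nat" where
  "ff n 0 = 1" | "ff n (Suc j) = (n - j) * ff n j"

lemma ff_zero: "n < j \<Longrightarrow> ff n j = 0"
proof (induction j)
  case 0 then show ?case by simp
next
  case (Suc j) then show ?case by (cases "n < j") auto
qed

lemma ff_shift: "ff (n+2) (i+2) = (n+2)*(n+1)*ff n i"
proof (induction i)
  case 0 then show ?case by (simp add: numeral_2_eq_2)
next
  case (Suc i)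
  have "ff (n+2) (Suc i + 2) = (n + 2 - (i+2)) * ff (n+2) (i+2)"
    by (simp add: numeral_2_eq_2)
  also have "\<dots> = (n - i) * ((n+2)*(n+1)*ff n i)" using Suc by simp
  also have "\<dots> = (n+2)*(n+1)*ff n (Suc i)" unfolding ff.simps(2) by (rule mult.left_commute)
  finally show ?case by simp
qed

lemma ff_rec: "real (ff (n+2) (i+2)) = ff n (i+2) + 2*(i+2)*ff n (i+1) + (i+2)*(i+1)*ff n i"
proof (cases "i \<le> n")
  case True
  then obtain u where n: "n = u + i" by (metis le_add_diff_inverse2)
  have a: "ff n (i+1) = u * ff n i" using n by simp
  have b: "ff n (i+2) = (u - 1) * u * ff n i" using n by (simp add: numeral_2_eq_2)
  have c: "real ((u - 1) * u) = (real u - 1) * u" by (cases u) (auto simp: algebra_simps)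
  have "real (ff (n+2) (i+2)) = (real n+2)*(real n+1)*ff n i" unfolding ff_shift by (simp add: algebra_simps)
  also have "\<dots> = ((real u - 1) * u) * ff n i + 2*(i+2)*(u * ff n i) + (i+2)*(i+1)*ff n i"
    unfolding n by (simp add: algebra_simps)
  also have "\<dots> = real (ff n (i+2)) + 2*(i+2)*real (ff n (i+1)) + (i+2)*(i+1)*real (ff n i)"
    unfolding a b of_nat_mult by (cases u) (auto simp: algebra_simps)
  finally show ?thesis by (simp del: ff.simps add: algebra_simps)
next
  case False
  then show ?thesis by (simp add: ff_zero)
qed

lemma ff_pow: "real (ff n j) * r^(n-j) * r^e = real (ff n j) * (r::real)^(n+e-j)"
proof (cases "j \<le> n")
  case True then show ?thesis by (simp add: power_add[symmetric] mult.assoc)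
next
  case False then show ?thesis by (simp add: ff_zero)
qed

lemma pderiv_funpow_0: "(pderiv ^^ j) 0 = 0"
  by (induction j) auto

lemma deriv_funpow_poly: "(deriv ^^ j) (poly p) = poly ((pderiv ^^ j) p)"
proof (induction j)
  case 0 then show ?case by simp
next
  case (Suc j)
  have "(deriv ^^ Suc j) (poly p) = deriv (poly ((pderiv ^^ j) p))" using Suc by simp
  also have "\<dots> = poly ((pderiv ^^ Suc j) p)"
    by (rule ext) (simp add: DERIV_imp_deriv)
  finally show ?case .
qed

lemma leibniz:
  fixes B P :: "real poly"
  assumes B3: "pderiv (pderiv (pderiv B)) = 0"
  shows "(pderiv ^^ j) (B * P) = B * (pderiv ^^ j) P
     + of_nat j * (pderiv B * (pderiv ^^ (j - 1)) P)
     + of_nat (j choose 2) * (pderiv (pderiv B) * (pderiv ^^ (j - 2)) P)"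
proof (induction j)
  case 0 then show ?case by simp
next
  case (Suc j)
  have IH: "(pderiv ^^ Suc j) (B * P) = pderiv (B * (pderiv ^^ j) P
     + of_nat j * (pderiv B * (pderiv ^^ (j - 1)) P)
     + of_nat (j choose 2) * (pderiv (pderiv B) * (pderiv ^^ (j - 2)) P))"
    using Suc by simp
  have c: "Suc j choose 2 = j + (j choose 2)"
    by (simp add: numeral_2_eq_2)
  show ?case
  proof (cases j)
    case 0 then show ?thesis unfolding IH by (simp add: pderiv_add pderiv_mult B3 algebra_simps numeral_2_eq_2)
  next
    case (Suc i)
    note ji = Suc
    show ?thesis
    proof (cases i)
      case 0 then show ?thesis unfolding IH ji by (simp add: pderiv_add pderiv_mult B3 algebra_simps numeral_2_eq_2)
    next
      case (Suc l)
      show ?thesis using IH unfolding c ji Suc by (simp add: pderiv_add pderiv_mult B3 algebra_simps numeral_2_eq_2)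
    qed
  qed
qed

lemma choose2: "real (Suc (Suc i) choose 2) * 2 = (real i + 2) * (real i + 1)"
proof -
  have "(Suc (Suc i) choose 2) * 2 = (i+2)*(i+1)"
    using choose_two[of "Suc (Suc i)"] by simp
  then have "real ((Suc (Suc i) choose 2) * 2) = real ((i+2)*(i+1))" by metis
  then show ?thesis by (simp add: algebra_simps)
qed

lemma main:
  fixes B :: "real poly" and x :: real
  assumes B3: "pderiv (pderiv (pderiv B)) = 0" and B0: "0 \<le> poly B x"
    and B1: "\<bar>poly (pderiv B) x\<bar> \<le> 2 * sqrt (poly B x)"
    and B2: "\<bar>poly (pderiv (pderiv B)) x\<bar> \<le> 2"
  shows "\<bar>poly ((pderiv ^^ j) (B ^ k)) x\<bar> \<le> real (ff (2*k) j) * sqrt (poly B x) ^ (2*k - j)"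
proof (induction k arbitrary: j)
  case 0
  show ?case
  proof (cases j)
    case 0 then show ?thesis by simp
  next
    case (Suc i) then show ?thesis by (simp add: funpow_Suc_right pderiv_funpow_0 del: funpow.simps)
  qed
next
  case (Suc k)
  define r where "r = sqrt (poly B x)"
  have r0: "0 \<le> r" unfolding r_def using B0 by simp
  have v: "poly B x = r^2" unfolding r_def using B0 by simp
  have B1': "\<bar>poly (pderiv B) x\<bar> \<le> 2 * r" using B1 unfolding r_def .
  define p where "p = (\<lambda>i. poly ((pderiv ^^ i) (B ^ k)) x)"
  have IH: "\<And>i. \<bar>p i\<bar> \<le> real (ff (2*k) i) * r ^ (2*k - i)"
    using Suc.IH unfolding p_def r_def by blast
  have E: "poly ((pderiv ^^ j) (B ^ Suc k)) x = r^2 * p j + real j * poly (pderiv B) x * p (j - 1)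
      + real (j choose 2) * poly (pderiv (pderiv B)) x * p (j - 2)"
    unfolding power_Suc leibniz[OF B3] p_def v[symmetric] by simp
  have T1: "\<bar>r^2 * p i\<bar> \<le> real (ff (2*k) i) * r ^ (2*k + 2 - i)" for i
  proof -
    have "\<bar>r^2 * p i\<bar> = r^2 * \<bar>p i\<bar>" by (simp add: abs_mult)
    also have "\<dots> \<le> r^2 * (real (ff (2*k) i) * r ^ (2*k - i))"
      by (rule mult_left_mono[OF IH]) simp
    also have "\<dots> = real (ff (2*k) i) * r ^ (2*k + 2 - i)"
      using ff_pow[of "2*k" i r 2] by (simp add: mult_ac)
    finally show ?thesis .
  qed
  have T2: "\<bar>poly (pderiv B) x * p i\<bar> \<le> 2 * (real (ff (2*k) i) * r ^ (2*k + 1 - i))" for i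
  proof -
    have "\<bar>poly (pderiv B) x * p i\<bar> = \<bar>poly (pderiv B) x\<bar> * \<bar>p i\<bar>" by (simp add: abs_mult)
    also have "\<dots> \<le> (2 * r) * (real (ff (2*k) i) * r ^ (2*k - i))"
      by (rule mult_mono[OF B1' IH]) (use r0 in auto)
    also have "\<dots> = 2 * (real (ff (2*k) i) * r ^ (2*k + 1 - i))"
      using ff_pow[of "2*k" i r 1] by (simp add: mult_ac)
    finally show ?thesis .
  qed
  have T3: "\<bar>poly (pderiv (pderiv B)) x * p i\<bar> \<le> 2 * (real (ff (2*k) i) * r ^ (2*k - i))" for i
  proof -
    have "\<bar>poly (pderiv (pderiv B)) x * p i\<bar> = \<bar>poly (pderiv (pderiv B)) x\<bar> * \<bar>p i\<bar>" by (simp add: abs_mult)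
    also have "\<dots> \<le> 2 * (real (ff (2*k) i) * r ^ (2*k - i))"
      by (rule mult_mono[OF B2 IH]) auto
    finally show ?thesis .
  qed
  show ?case
  proof (cases j)
    case 0
    have "\<bar>poly ((pderiv ^^ j) (B ^ Suc k)) x\<bar> = \<bar>r^2 * p 0\<bar>"
      using E unfolding 0 by (simp add: numeral_2_eq_2)
    also have "\<dots> \<le> real (ff (2 * Suc k) j) * r ^ (2 * Suc k - j)"
      using T1[of 0] 0 by simp
    finally show ?thesis unfolding r_def .
  next
    case (Suc i)
    note ji = Suc
    show ?thesis
    proof (cases i)
      case 0
      have "\<bar>poly ((pderiv ^^ j) (B ^ Suc k)) x\<bar> = \<bar>r^2 * p 1 + poly (pderiv B) x * p 0\<bar>"
        using E unfolding ji 0 by (simp add: numeral_2_eq_2)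
      also have "\<dots> \<le> real (ff (2*k) 1) * r ^ (2*k + 2 - 1) + 2 * (real (ff (2*k) 0) * r ^ (2*k + 1 - 0))"
        using T1[of 1] T2[of 0] by linarith
      also have "\<dots> = real (ff (2 * Suc k) j) * r ^ (2 * Suc k - j)"
        unfolding ji 0 by (simp add: algebra_simps)
      finally show ?thesis unfolding r_def .
    next
      case (Suc l)
      have jl: "j = Suc (Suc l)" using ji Suc by simp
      have "\<bar>poly ((pderiv ^^ j) (B ^ Suc k)) x\<bar> \<le> \<bar>r^2 * p j\<bar> + real j * \<bar>poly (pderiv B) x * p (j - 1)\<bar>
          + real (j choose 2) * \<bar>poly (pderiv (pderiv B)) x * p (j - 2)\<bar>"
        unfolding E by (simp add: abs_mult mult.assoc abs_triangle_ineq[THEN order_trans] order_trans[OF abs_triangle_ineq add_mono])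
      also have "\<dots> \<le> real (ff (2*k) j) * r ^ (2*k + 2 - j) + real j * (2 * (real (ff (2*k) (j-1)) * r ^ (2*k + 1 - (j-1))))
          + real (j choose 2) * (2 * (real (ff (2*k) (j-2)) * r ^ (2*k - (j-2))))"
        by (intro add_mono mult_left_mono T1 T2 T3) auto
      also have "\<dots> = (real (ff (2*k) (l+2)) + 2 * (real l + 2) * real (ff (2*k) (l+1))
          + (real l + 2) * (real l + 1) * real (ff (2*k) l)) * r ^ (2*k - l)"
      proof -
        have ch: "real (Suc (Suc l) choose 2) = (real l+2)*(real l+1)/2" using choose2[of l] by simp
        show ?thesis unfolding jl ch by (simp add: algebra_simps)
      qed
      also have "\<dots> = real (ff (2 * Suc k) j) * r ^ (2 * Suc k - j)"
        unfolding jl using ff_rec[of "2*k" l] by (simp del: ff.simps add: algebra_simps)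
      finally show ?thesis unfolding r_def .
    qed
  qed
qed

lemma ff_fact: "j \<le> n \<Longrightarrow> real (ff n j) = fact n / fact (n - j)"
proof (induction j)
  case 0 then show ?case by simp
next
  case (Suc j)
  then have IH: "real (ff n j) = fact n / fact (n - j)" by simp
  have nj: "n - j = Suc (n - Suc j)" using Suc.prems by simp
  have f: "fact (n - j) = real (n - j) * (fact (n - Suc j) :: real)" by (metis nj fact_Suc)
  have pos: "real (n - j) > 0" using Suc.prems by simp
  have "real (ff n (Suc j)) = real (n - j) * (fact n / fact (n - j))" using IH by simp
  also have "\<dots> = fact n / fact (n - Suc j)"
    unfolding f using pos by (simp add: field_simps)
  finally show ?case .
qed

lemma base_nonneg:
  fixes a m e :: real assumes "0 \<le> a"
  shows "0 \<le> a * e^2 + a^2 * m * e + a^3/3 * m^2"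
proof -
  have "a * e^2 + a^2 * m * e + a^3/3 * m^2 = a * (e + a*m/2)^2 + a^3 * m^2 / 12"
    by (simp add: power2_eq_square power3_eq_cube algebra_simps)
  also have "\<dots> \<ge> 0" using assms by simp
  finally show ?thesis by simp
qed

lemma deriv_bound:
  fixes a m e :: real assumes "0 \<le> a" "a \<le> 1"
  shows "(a^2 * m + 2 * a * e)^2 \<le> 4 * (a * e^2 + a^2 * m * e + a^3/3 * m^2)"
proof -
  have "(a^2 * m + 2 * a * e)^2 = 4 * a * (a * e^2 + a^2 * m * e + a^3/3 * m^2) - a^4 * m^2 / 3"
    by (simp add: power2_eq_square power3_eq_cube power4_eq_xxxx algebra_simps)
  also have "\<dots> \<le> 4 * a * (a * e^2 + a^2 * m * e + a^3/3 * m^2)" by simp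
  also have "\<dots> \<le> 4 * (a * e^2 + a^2 * m * e + a^3/3 * m^2)"
    using mult_right_mono[OF assms(2) base_nonneg[OF assms(1), of e m]] by simp
  finally show ?thesis .
qed

lemma powr_half_pow:
  fixes v :: real and n :: nat assumes "0 \<le> v" "n > 0"
  shows "v powr (real n / 2) = sqrt v ^ n"
proof (cases "v = 0")
  case True then show ?thesis using assms by simp
next
  case False
  then have "0 < v" using assms by simp
  then have "v powr (real n / 2) = (v powr (1/2)) powr real n" by (simp add: powr_powr)
  also have "\<dots> = sqrt v ^ n" using \<open>0 < v\<close> by (simp add: powr_half_sqrt powr_realpow)
  finally show ?thesis .
qed

theorem lemma4p1:
  fixes t0 t eta :: real and k j :: nat and m :: int
  assumes "0 < t0" "t0 \<le> 1/2" "t0 \<le> t" "t \<le> 1" "j \<le> 2 * k"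
  shows "\<bar>((deriv ^^ j) (\<lambda>e. rho t0 t (real k) (real_of_int m) e)) eta\<bar>
    \<le> 8 ^ j * (fact (2 * k) / fact (2 * k - j)) * rho t0 t (real k - real j / 2) (real_of_int m) eta"
proof -
  define a where "a = t - t0"
  define M where "M = real_of_int m"
  have a0: "0 \<le> a" and a1: "a \<le> 1" using assms unfolding a_def by auto
  define Bp where "Bp = [: a^3/3 * M^2, a^2 * M, a :]"
  have pB: "poly Bp e = rho_base t0 t M e" for e
    unfolding Bp_def rho_base_def a_def by (simp add: algebra_simps power2_eq_square)
  have pB': "poly Bp e = a * e^2 + a^2 * M * e + a^3/3 * M^2" for e
    unfolding Bp_def by (simp add: algebra_simps power2_eq_square)
  have B0: "0 \<le> poly Bp e" for e unfolding pB' using base_nonneg[OF a0] .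
  have B3: "pderiv (pderiv (pderiv Bp)) = 0" unfolding Bp_def by (simp add: pderiv_pCons)
  have d1: "poly (pderiv Bp) e = a^2 * M + 2 * a * e" for e
    unfolding Bp_def by (simp add: pderiv_pCons algebra_simps)
  have d2: "poly (pderiv (pderiv Bp)) e = 2 * a" for e
    unfolding Bp_def by (simp add: pderiv_pCons algebra_simps)
  have B1: "\<bar>poly (pderiv Bp) eta\<bar> \<le> 2 * sqrt (poly Bp eta)"
  proof -
    have "(poly (pderiv Bp) eta)^2 \<le> (2 * sqrt (poly Bp eta))^2"
      unfolding d1 using deriv_bound[OF a0 a1, of M eta] B0[of eta] pB'[of eta]
      by (simp add: power_mult_distrib)
    then show ?thesis using abs_le_square_iff
      by (metis abs_of_nonneg B0 real_sqrt_ge_zero mult_nonneg_nonneg zero_le_numeral)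
  qed
  have B2: "\<bar>poly (pderiv (pderiv Bp)) eta\<bar> \<le> 2" unfolding d2 using a0 a1 by simp
  have rho_k: "(\<lambda>e. rho t0 t (real k) M e) = poly (Bp ^ k)"
  proof
    fix e
    show "rho t0 t (real k) M e = poly (Bp ^ k) e"
    proof (cases "k = 0")
      case True then show ?thesis by (simp add: rho_def)
    next
      case False
      then have "rho t0 t (real k) M e = poly Bp e powr real k" by (simp add: rho_def pB)
      also have "\<dots> = poly Bp e ^ k"
      proof (cases "poly Bp e = 0")
        case True then show ?thesis using False by simp
      next
        case False then show ?thesis using B0[of e] by (simp add: powr_realpow)
      qed
      finally show ?thesis by (simp add: poly_power)
    qed
  qed
  have rhs: "rho t0 t (real k - real j / 2) M eta = sqrt (poly Bp eta) ^ (2 * k - j)"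
  proof (cases "j = 2 * k")
    case True then show ?thesis by (simp add: rho_def)
  next
    case False
    then have pos: "2 * k - j > 0" using assms(5) by simp
    have ex: "real k - real j / 2 = real (2 * k - j) / 2" using assms(5) by (simp add: of_nat_diff)
    have "real k - real j / 2 \<noteq> 0" using pos ex by simp
    then have "rho t0 t (real k - real j / 2) M eta = poly Bp eta powr (real (2 * k - j) / 2)"
      by (simp add: rho_def pB ex)
    also have "\<dots> = sqrt (poly Bp eta) ^ (2 * k - j)" by (rule powr_half_pow[OF B0 pos])
    finally show ?thesis .
  qed
  have main': "\<bar>poly ((pderiv ^^ j) (Bp ^ k)) eta\<bar> \<le> real (ff (2*k) j) * sqrt (poly Bp eta) ^ (2*k - j)"
    by (rule main[OF B3 B0 B1 B2])
  have nn: "0 \<le> real (ff (2*k) j) * sqrt (poly Bp eta) ^ (2*k - j)" using B0 by simp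
  have "\<bar>((deriv ^^ j) (\<lambda>e. rho t0 t (real k) M e)) eta\<bar> = \<bar>poly ((pderiv ^^ j) (Bp ^ k)) eta\<bar>"
    unfolding rho_k deriv_funpow_poly ..
  also have "\<dots> \<le> 1 * (real (ff (2*k) j) * sqrt (poly Bp eta) ^ (2*k - j))" using main' by simp
  also have "\<dots> \<le> 8 ^ j * (real (ff (2*k) j) * sqrt (poly Bp eta) ^ (2*k - j))"
    by (rule mult_right_mono[OF _ nn]) simp
  also have "\<dots> = 8 ^ j * (fact (2 * k) / fact (2 * k - j)) * rho t0 t (real k - real j / 2) M eta"
    unfolding rhs ff_fact[OF assms(5)] by simp
  finally show ?thesis unfolding M_def .
qed

end
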